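(* Let $A, B \in\mathbb{C}^{n\times n}$ be matrices of index at most $1$. Then $A\leq^{1GD}B$ if and only if $A\,\#\!\leq B$, where $A\,\#\!\leq B$ (left sharp partial order) means $A^2=AB$ and $R(A)\subseteq R(B)$.
   Context: For $A\in\mathbb{C}^{n\times n}$, $ind(A)$ is the smallest nonnegative integer $k$ with $\mathrm{rank}(A^k)=\mathrm{rank}(A^{k+1})$. $A\{1\}$ is the set of matrices $X$ with $AXA=A$. With $k=ind(A)$, $A\{GD\}$ is the set of matrices $X$ with $AXA=A$, $XA^{k+1}=A^k$, $A^{k+1}X=A^k$ (G-Drazin inverses). A 1GD inverse of $A$ is a matrix $A^{1GD}=A^{-}AA^{GD}$ with $A^-\in A\{1\}$, $A^{GD}\in A\{GD\}$. We write $A\leq^{1GD}B$ if $AA^{1GD}=BA^{1GD}$ and $A^{1GD}A=A^{1GD}B$ for some 1GD inverse $A^{1GD}$ of $A$. $R(\cdot)$ denotes range. *)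

theory Defs
  imports "HOL-Analysis.Analysis"
begin

fun matpow :: "'a::comm_ring_1^'n^'n \<Rightarrow> nat \<Rightarrow> 'a^'n^'n" where
  "matpow A 0 = mat 1"
| "matpow A (Suc k) = A ** matpow A k"

definition ind :: "complex^'n^'n \<Rightarrow> nat" where
  "ind A = (LEAST k. rank (matpow A k) = rank (matpow A (Suc k)))"

definition mat_range :: "complex^'n^'m \<Rightarrow> (complex^'m) set" where
  "mat_range A = range (\<lambda>x. A *v x)"

definition inner_inv1 :: "complex^'n^'n \<Rightarrow> complex^'n^'n \<Rightarrow> bool" where
  "inner_inv1 A X \<longleftrightarrow> A ** X ** A = A"

definition GD_inv :: "complex^'n^'n \<Rightarrow> complex^'n^'n \<Rightarrow> bool" where
  "GD_inv A X \<longleftrightarrow> A ** X ** A = A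
     \<and> X ** matpow A (ind A + 1) = matpow A (ind A)
     \<and> matpow A (ind A + 1) ** X = matpow A (ind A)"

definition oneGD_inv :: "complex^'n^'n \<Rightarrow> complex^'n^'n \<Rightarrow> bool" where
  "oneGD_inv A Y \<longleftrightarrow> (\<exists>X G. inner_inv1 A X \<and> GD_inv A G \<and> Y = X ** A ** G)"

definition leq_1GD :: "complex^'n^'n \<Rightarrow> complex^'n^'n \<Rightarrow> bool" where
  "leq_1GD A B \<longleftrightarrow> (\<exists>Y. oneGD_inv A Y \<and> A ** Y = B ** Y \<and> Y ** A = Y ** B)"

definition left_sharp_leq :: "complex^'n^'n \<Rightarrow> complex^'n^'n \<Rightarrow> bool" where
  "left_sharp_leq A B \<longleftrightarrow> A ** A = A ** B \<and> mat_range A \<subseteq> mat_range B"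

end

theory Submission
  imports Defs
begin

lemma transpose_axis: "transpose M *v axis i 1 = row i (M::'a::comm_ring_1^'n^'m)"
  by (simp add: vec_eq_iff matrix_vector_mult_def transpose_def row_def axis_def if_distrib if_distribR cong: if_cong)

lemma range_transpose_span:
  fixes M :: "'a::field^'n^'m"
  shows "range (\<lambda>c. transpose M *v c) = vec.span (rows M)"
proof -
  have "rows M = (\<lambda>c. transpose M *v c) ` cart_basis"
    unfolding cart_basis_def rows_def Setcompr_eq_image image_image
    by (simp only: transpose_axis)
  then have "vec.span (rows M) = (\<lambda>c. transpose M *v c) ` vec.span cart_basis"
    using vec.span_image by metis
  then show ?thesis by simp
qed

lemma mult_col: "(B ** W) $ i $ j = (B *v (\<chi> k. W $ k $ j)) $ i"
  by (simp add: matrix_matrix_mult_def matrix_vector_mult_def)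

lemma axis_col: "(A *v axis j 1) $ i = A $ i $ (j::'n) " for A :: "'a::comm_ring_1^'n^'m"
  by (simp add: matrix_vector_mult_def axis_def mult.commute[of _ "if _ then _ else _"] if_distrib if_distribR cong: if_cong)

lemma range_sub_factor:
  fixes A :: "'a::comm_ring_1^'n^'m" and B :: "'a^'p^'m"
  assumes "range (\<lambda>x. A *v x) \<subseteq> range (\<lambda>x. B *v x)"
  shows "\<exists>W. B ** W = A"
proof -
  have "\<forall>j. \<exists>x. B *v x = A *v axis j 1"
  proof
    fix j
    have "A *v axis j 1 \<in> range (\<lambda>x. B *v x)" using assms by (rule subsetD) (rule rangeI)
    then obtain x where "A *v axis j 1 = B *v x" by (rule rangeE)
    then show "\<exists>x. B *v x = A *v axis j 1" by (intro exI[of _ x]) (rule sym)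
  qed
  then obtain f where f: "\<forall>j. B *v f j = A *v axis j 1" by (rule choice[THEN exE])
  define W where "W = (\<chi> k j. f j $ k)"
  have "\<forall>i j. (B ** W) $ i $ j = A $ i $ j"
  proof (intro allI)
    fix i j
    have "(\<chi> k. W $ k $ j) = f j" by (simp add: W_def vec_eq_iff)
    then have "(B ** W) $ i $ j = (A *v axis j 1) $ i" by (simp add: mult_col f)
    also have "\<dots> = A $ i $ j" by (rule axis_col)
    finally show "(B ** W) $ i $ j = A $ i $ j" .
  qed
  then have "B ** W = A" by (simp add: vec_eq_iff)
  then show ?thesis by (rule exI)
qed

lemma range_span_rows:
  fixes M :: "'a::field^'n^'m"
  shows "range (\<lambda>c. M *v c) = vec.span (rows (transpose M))"
  using range_transpose_span[of "transpose M"] by simp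

lemma rows_mult_sub:
  fixes M :: "'a::field^'n^'n" and N :: "'a^'n^'n"
  shows "vec.span (rows (M ** N)) \<subseteq> vec.span (rows N)"
proof -
  have "range (\<lambda>c. transpose (M ** N) *v c) \<subseteq> range (\<lambda>c. transpose N *v c)"
    by (auto simp: matrix_transpose_mul matrix_vector_mul_assoc[symmetric])
  then show ?thesis unfolding range_transpose_span .
qed

lemma rank_mult_le:
  fixes M :: "'a::field^'n^'n" and N :: "'a^'n^'n"
  shows "rank (M ** N) \<le> rank N"
  unfolding row_rank_def_gen
  using rows_mult_sub[of M N] vec.span_superset[of "rows (M ** N)"] vec.dim_mono by blast

lemma rank_eq_factor:
  fixes M :: "'a::field^'n^'n" and N :: "'a^'n^'n"
  assumes "rank (M ** N) = rank N"
  shows "\<exists>V. V ** (M ** N) = N"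
proof -
  have sub: "rows (M ** N) \<subseteq> vec.span (rows N)"
    using rows_mult_sub[of M N] vec.span_superset[of "rows (M ** N)"] by blast
  have "vec.dim (vec.span (rows N)) \<le> vec.dim (rows (M ** N))"
    using assms unfolding row_rank_def_gen by simp
  then have "vec.span (rows (M ** N)) = vec.span (vec.span (rows N))"
    using vec.dim_eq_span[OF sub] by blast
  then have "range (\<lambda>c. transpose N *v c) \<subseteq> range (\<lambda>c. transpose (M ** N) *v c)"
    unfolding range_transpose_span vec.span_span by simp
  then obtain W where "transpose (M ** N) ** W = transpose N"
    using range_sub_factor by blast
  then have "transpose (transpose (M ** N) ** W) = N" by simp
  then have "transpose W ** (M ** N) = N" by (simp add: matrix_transpose_mul)
  then show ?thesis by blast
qed

lemma rank_stab:
  fixes A :: "'a::field^'n^'n"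
  shows "\<exists>k. rank (matpow A k) = rank (matpow A (Suc k))"
proof (rule ccontr)
  assume "\<not> ?thesis"
  then have lt: "\<And>k. rank (matpow A (Suc k)) < rank (matpow A k)"
    using rank_mult_le[of A] by (metis le_neq_implies_less matpow.simps(2))
  have "\<And>k. rank (matpow A k) + k \<le> rank (matpow A 0)"
  proof -
    fix k show "rank (matpow A k) + k \<le> rank (matpow A 0)"
    proof (induction k)
      case 0 show ?case by simp
    next
      case (Suc k) then show ?case using lt[of k] by linarith
    qed
  qed
  from this[of "Suc (rank (matpow A 0))"] show False by simp
qed

lemma range_sq:
  fixes A :: "'a::field^'n^'n"
  assumes V: "V ** (A ** A) = A"
  shows "\<exists>U. (A ** A) ** U = A"
proof -
  define S where "S = range (\<lambda>x. A *v x)"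
  have subS: "vec.subspace S" unfolding S_def range_span_rows by (rule vec.subspace_span)
  have spanS: "vec.span S = S" using subS vec.span_eq_iff by blast
  have key: "\<And>u. A *v u = V *v ((A ** A) *v u)"
  proof -
    fix u
    have "V *v ((A ** A) *v u) = (V ** (A ** A)) *v u" by (simp add: matrix_vector_mul_assoc)
    then show "A *v u = V *v ((A ** A) *v u)" using V by simp
  qed
  have inj: "inj_on (\<lambda>x. A *v x) (vec.span S)"
    unfolding spanS
  proof (rule inj_onI)
    fix x y assume "x \<in> S" "y \<in> S" and e: "A *v x = A *v y"
    then obtain u w where u: "x = A *v u" and w: "y = A *v w" unfolding S_def by blast
    have "(A ** A) *v u = (A ** A) *v w" using e u w by (simp add: matrix_vector_mul_assoc)
    then show "x = y" using u w key by metis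
  qed
  have "vec.dim ((\<lambda>x. A *v x) ` S) = vec.dim S"
    by (rule vec.dim_image_eq[OF matrix_vector_mul_linear_gen inj])
  moreover have img: "(\<lambda>x. A *v x) ` S = range (\<lambda>x. (A ** A) *v x)"
    unfolding S_def image_image by (simp add: matrix_vector_mul_assoc)
  moreover have subS2: "vec.subspace (range (\<lambda>x. (A ** A) *v x))"
    unfolding range_span_rows by (rule vec.subspace_span)
  moreover have "range (\<lambda>x. (A ** A) *v x) \<subseteq> S"
    unfolding S_def by (auto simp: matrix_vector_mul_assoc[symmetric])
  ultimately have "range (\<lambda>x. (A ** A) *v x) = S"
    using vec.subspace_dim_equal[OF subS2 subS] by simp
  then have "range (\<lambda>x. A *v x) \<subseteq> range (\<lambda>x. (A ** A) *v x)" unfolding S_def by simp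
  then show ?thesis using range_sub_factor by blast
qed

lemma group_inv_alg:
  fixes A :: "'a::field^'n^'n"
  assumes V: "V ** (A ** A) = A" and U: "(A ** A) ** U = A"
  shows "\<exists>G. A ** G ** A = A \<and> G ** A = A ** G \<and> A ** A ** G = A \<and> G ** A ** A = A \<and> G ** A ** G = G"
proof -
  have AU: "A ** U = V ** A"
  proof -
    have "A ** U = (V ** (A ** A)) ** U" using V by simp
    also have "\<dots> = V ** ((A ** A) ** U)" by (simp add: matrix_mul_assoc)
    also have "\<dots> = V ** A" using U by simp
    finally show ?thesis .
  qed
  define P where "P = V ** A"
  have PP: "P ** P = P"
  proof -
    have "P ** P = (V ** A) ** (A ** U)" unfolding P_def AU by simp
    also have "\<dots> = V ** ((A ** A) ** U)" by (simp add: matrix_mul_assoc)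
    finally show ?thesis using U P_def by simp
  qed
  have AP: "A ** P = A" unfolding P_def AU[symmetric] using U by (simp add: matrix_mul_assoc)
  have PA: "P ** A = A" unfolding P_def using V by (simp add: matrix_mul_assoc)
  define G where "G = V ** A ** U"
  have G1: "G = P ** U" by (simp add: G_def P_def)
  have G2: "G = V ** P"
  proof -
    have "V ** P = V ** (A ** U)" using AU P_def by simp
    then show ?thesis by (simp add: G_def matrix_mul_assoc)
  qed
  have AG: "A ** G = P"
  proof -
    have "A ** G = (A ** P) ** U" unfolding G1 by (simp add: matrix_mul_assoc)
    then show ?thesis using AP AU P_def by simp
  qed
  have GA: "G ** A = P"
  proof -
    have "G ** A = V ** (P ** A)" unfolding G2 by (simp add: matrix_mul_assoc)
    then show ?thesis using PA P_def by simp
  qed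
  show ?thesis
  proof (intro exI conjI)
    show "A ** G ** A = A" using AG PA by simp
    show "G ** A = A ** G" using AG GA by simp
    have "A ** A ** G = A ** (A ** G)" by (simp add: matrix_mul_assoc)
    then show "A ** A ** G = A" using AG AP by simp
    show "G ** A ** A = A" using GA PA by simp
    have "P ** (P ** U) = (P ** P) ** U" by (simp add: matrix_mul_assoc)
    then show "G ** A ** G = G" using GA G1 PP by simp
  qed
qed

lemma matpow1: "matpow A 1 = A" by (simp add: matrix_mul_rid)
lemma matpow2: "matpow A 2 = A ** A" by (simp add: numeral_2_eq_2 matrix_mul_rid)

lemma ind_cases:
  fixes A :: "complex^'n^'n"
  assumes "ind A \<le> 1"
  shows "(ind A = 0 \<and> rank (A ** mat 1) = rank (mat 1 :: complex^'n^'n)) \<or> (ind A = 1 \<and> rank (A ** A) = rank A)"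
proof -
  have P: "rank (matpow A (ind A)) = rank (matpow A (Suc (ind A)))"
    unfolding ind_def by (rule LeastI_ex[OF rank_stab])
  have "ind A = 0 \<or> ind A = 1" using assms by auto
  then show ?thesis
  proof
    assume h: "ind A = 0"
    then show ?thesis using P by simp
  next
    assume h: "ind A = 1"
    then show ?thesis using P by (simp add: matrix_mul_rid)
  qed
qed

lemma gd_exists:
  fixes A :: "complex^'n^'n"
  assumes "ind A \<le> 1"
  shows "\<exists>G. GD_inv A G \<and> G ** A = A ** G \<and> G ** A ** G = G \<and> A ** G ** A = A \<and> G ** A ** A = A \<and> A ** A ** G = A"
  using ind_cases[OF assms]
proof
  assume h: "ind A = 0 \<and> rank (A ** mat 1) = rank (mat 1 :: complex^'n^'n)"
  then obtain V where "V ** (A ** mat 1) = mat 1" using rank_eq_factor by blast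
  then have VA: "V ** A = mat 1" by (simp add: matrix_mul_rid)
  then have AV: "A ** V = mat 1" using matrix_left_right_inverse by blast
  show ?thesis
  proof (intro exI conjI)
    show "GD_inv A V" unfolding GD_inv_def using h VA AV
      by (simp add: matrix_mul_rid matrix_mul_lid matrix_mul_assoc)
    show "V ** A = A ** V" using VA AV by simp
    show "V ** A ** V = V" using VA by (simp add: matrix_mul_lid)
    show "A ** V ** A = A" using AV by (simp add: matrix_mul_lid)
    show "V ** A ** A = A" using VA by (simp add: matrix_mul_lid)
    have "A ** A ** V = A ** (A ** V)" by (simp add: matrix_mul_assoc)
    then show "A ** A ** V = A" using AV by (simp add: matrix_mul_rid)
  qed
next
  assume h: "ind A = 1 \<and> rank (A ** A) = rank A"
  then obtain V where V: "V ** (A ** A) = A" using rank_eq_factor by blast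
  obtain U where "(A ** A) ** U = A" using range_sq[OF V] by blast
  then obtain G where G: "A ** G ** A = A" "G ** A = A ** G" "A ** A ** G = A" "G ** A ** A = A" "G ** A ** G = G"
    using group_inv_alg[OF V] by blast
  have g4: "G ** (A ** A) = A" using G(4) by (simp add: matrix_mul_assoc)
  have "GD_inv A G" unfolding GD_inv_def using h G(1,3) g4
    by (simp add: matpow1 matpow2)
  then show ?thesis using G by blast
qed

theorem theorem3p14:
  fixes A B :: "complex^'n^'n"
  assumes "ind A \<le> 1" and "ind B \<le> 1"
  shows "leq_1GD A B \<longleftrightarrow> left_sharp_leq A B"
proof
  assume "leq_1GD A B"
  then obtain X G where X: "A ** X ** A = A" and GD: "GD_inv A G"
    and h1: "A ** (X ** A ** G) = B ** (X ** A ** G)"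
    and h2: "(X ** A ** G) ** A = (X ** A ** G) ** B"
    unfolding leq_1GD_def oneGD_inv_def inner_inv1_def by blast
  have AGA: "A ** G ** A = A" using GD unfolding GD_inv_def by blast
  have AAG: "A ** A ** G = A"
    using ind_cases[OF assms(1)] GD unfolding GD_inv_def
    by (auto simp: matpow1 matpow2 matrix_mul_assoc[symmetric] matrix_mul_rid)
  have e1: "A = B ** (X ** A)"
  proof -
    have "A = (A ** X ** A) ** G ** A" using X AGA by simp
    also have "\<dots> = (A ** (X ** A ** G)) ** A" by (simp add: matrix_mul_assoc)
    also have "\<dots> = (B ** (X ** A ** G)) ** A" using h1 by simp
    also have "\<dots> = B ** X ** (A ** G ** A)" by (simp add: matrix_mul_assoc)
    also have "\<dots> = B ** (X ** A)" using AGA by (simp add: matrix_mul_assoc)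
    finally show ?thesis .
  qed
  have e2: "A = A ** G ** B"
  proof -
    have "A = (A ** X ** A) ** G ** A" using X AGA by simp
    also have "\<dots> = A ** ((X ** A ** G) ** A)" by (simp add: matrix_mul_assoc)
    also have "\<dots> = A ** ((X ** A ** G) ** B)" using h2 by simp
    also have "\<dots> = (A ** X ** A) ** G ** B" by (simp add: matrix_mul_assoc)
    also have "\<dots> = A ** G ** B" using X by simp
    finally show ?thesis .
  qed
  have "A ** A = A ** B"
  proof -
    have "A ** A = A ** (A ** G ** B)" using e2 by simp
    also have "\<dots> = (A ** A ** G) ** B" by (simp add: matrix_mul_assoc)
    finally show ?thesis using AAG by simp
  qed
  moreover have "mat_range A \<subseteq> mat_range B"
  proof
    fix y assume "y \<in> mat_range A"
    then obtain x where "y = A *v x" unfolding mat_range_def by blast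
    then have "y = B *v ((X ** A) *v x)" using e1 by (metis matrix_vector_mul_assoc)
    then show "y \<in> mat_range B" unfolding mat_range_def by blast
  qed
  ultimately show "left_sharp_leq A B" unfolding left_sharp_leq_def by blast
next
  assume "left_sharp_leq A B"
  then have AAB: "A ** A = A ** B" and rg: "mat_range A \<subseteq> mat_range B"
    unfolding left_sharp_leq_def by auto
  obtain W where BW: "B ** W = A" using range_sub_factor rg unfolding mat_range_def by blast
  obtain G where GD: "GD_inv A G" and c: "G ** A = A ** G" and gag: "G ** A ** G = G"
    and aga: "A ** G ** A = A" and gaa: "G ** A ** A = A"
    using gd_exists[OF assms(1)] by blast
  have AW: "A ** W = A"
  proof -
    have "A ** A ** W = A ** B ** W" using AAB by simp
    also have "\<dots> = A ** (B ** W)" by (simp add: matrix_mul_assoc)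
    finally have "A ** A ** W = A ** A" using BW by simp
    then have "G ** (A ** A ** W) = G ** (A ** A)" by simp
    then have "(G ** A ** A) ** W = G ** A ** A" by (simp add: matrix_mul_assoc)
    then show ?thesis using gaa by simp
  qed
  have GB: "G ** B = G ** A"
  proof -
    have "G ** B = (G ** (A ** G)) ** B" using gag by (simp add: matrix_mul_assoc)
    also have "\<dots> = (G ** (G ** A)) ** B" using c by simp
    also have "\<dots> = G ** G ** (A ** B)" by (simp add: matrix_mul_assoc)
    also have "\<dots> = G ** G ** (A ** A)" using AAB by simp
    also have "\<dots> = G ** (G ** A ** A)" by (simp add: matrix_mul_assoc)
    also have "\<dots> = G ** A" using gaa by simp
    finally show ?thesis .
  qed
  define X where "X = W ** G"
  have inn: "inner_inv1 A X" unfolding inner_inv1_def X_def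
  proof -
    have "A ** (W ** G) ** A = (A ** W) ** G ** A" by (simp add: matrix_mul_assoc)
    then show "A ** (W ** G) ** A = A" using AW aga by simp
  qed
  have Y: "X ** A ** G = W ** G"
  proof -
    have "W ** G ** A ** G = W ** (G ** A ** G)" by (simp add: matrix_mul_assoc)
    then show "X ** A ** G = W ** G" unfolding X_def using gag by simp
  qed
  have "oneGD_inv A (W ** G)" unfolding oneGD_inv_def using inn GD Y by metis
  moreover have "A ** (W ** G) = B ** (W ** G)"
  proof -
    have "A ** (W ** G) = (A ** W) ** G" "B ** (W ** G) = (B ** W) ** G" by (simp_all add: matrix_mul_assoc)
    then show ?thesis using AW BW by simp
  qed
  moreover have "(W ** G) ** A = (W ** G) ** B"
  proof -
    have "(W ** G) ** A = W ** (G ** A)" "(W ** G) ** B = W ** (G ** B)" by (simp_all add: matrix_mul_assoc)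
    then show ?thesis using GB by simp
  qed
  ultimately show "leq_1GD A B" unfolding leq_1GD_def by blast
qed

end
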